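(* Let $\Omega\subset\mathbb{R}^d$ be a bounded domain with smooth boundary, $T>0$, $0<\alpha<1$, and consider $$\partial_{0+}^\alpha u-\Delta u=F(x,t):=f(x)g(t) \text{ in }\Omega\times(0,T],\qquad \frac{\partial u}{\partial\nu}+\lambda(x)u=b(x,t)\text{ on }\partial\Omega\times(0,T],\qquad u(x,0)=u_0(x)\text{ in }\overline{\Omega},$$ with $u_0\in\mathcal{D}((-\Delta)^3)$, $g\in C^1[0,T]$, $f\in\mathcal{D}((-\Delta)^2)$, $b\in C^2([0,T];H^{9/2}(\partial\Omega))$. Assume $u_0\ge0$, $F\ge0$, $b\ge0$, and $0<\lambda^-<\lambda(x)\le\lambda^+$ for constants $\lambda^\pm$. If $u$ is the classical solution of this problem, then $u(x,t)\ge0$ in $\overline{\Omega}\times[0,T]$.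
   Context: $\nu$ is the outward unit normal; $\partial_{0+}^\alpha$ is the Caputo derivative $\frac{1}{\Gamma(1-\alpha)}\int_0^t\frac{\partial_\tau u(x,\tau)}{(t-\tau)^\alpha}d\tau$. $\mathcal{D}((-\Delta)^\gamma)=\{f\in L^2(\Omega):\sum_n|\mu_n^\gamma(f,\psi_n)|^2<\infty\}$, where $(\mu_n,\psi_n)$ is the $L^2$-orthonormal Robin eigensystem $-\Delta\psi_n=\mu_n\psi_n$, $\partial_\nu\psi_n+\lambda\psi_n=0$. A classical solution is a solution in $C(\overline{\Omega}\times[0,T])$ such that for every $x\in\Omega$, $u(x,\cdot)\in C^1(0,T]$ with $\partial_tu(x,\cdot)\in L^1(0,T)$, and for every $t\in(0,T]$, $u(\cdot,t)\in C^2(\Omega)$. *)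

theory Defs
  imports "HOL-Analysis.Analysis"
begin

fun pd :: "'a list \<Rightarrow> ('a::euclidean_space \<Rightarrow> real) \<Rightarrow> 'a \<Rightarrow> real" where
  "pd [] f = f"
| "pd (v # vs) f = (\<lambda>x. deriv (\<lambda>s. pd vs f (x + s *\<^sub>R v)) 0)"

definition Ck_on :: "nat \<Rightarrow> 'a set \<Rightarrow> ('a::euclidean_space \<Rightarrow> real) \<Rightarrow> bool" where
  "Ck_on k S f \<longleftrightarrow>
     (\<forall>vs. set vs \<subseteq> Basis \<and> length vs \<le> k \<longrightarrow>
        continuous_on S (pd vs f) \<and>
        (length vs < k \<longrightarrow>
           (\<forall>v\<in>Basis. \<forall>x\<in>S. (\<lambda>s. pd vs f (x + s *\<^sub>R v)) differentiable (at 0))))"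

definition smooth_on :: "'a set \<Rightarrow> ('a::euclidean_space \<Rightarrow> real) \<Rightarrow> bool" where
  "smooth_on S f \<longleftrightarrow> (\<forall>k. Ck_on k S f)"

definition grad :: "('a::euclidean_space \<Rightarrow> real) \<Rightarrow> 'a \<Rightarrow> 'a" where
  "grad f x = (\<Sum>i\<in>Basis. pd [i] f x *\<^sub>R i)"

definition laplacian :: "('a::euclidean_space \<Rightarrow> real) \<Rightarrow> 'a \<Rightarrow> real" where
  "laplacian f x = (\<Sum>i\<in>Basis. pd [i, i] f x)"

definition defining_function :: "'a set \<Rightarrow> ('a::euclidean_space \<Rightarrow> real) \<Rightarrow> bool" where
  "defining_function \<Omega> \<phi> \<longleftrightarrow>
     smooth_on UNIV \<phi> \<and> \<Omega> = {x. \<phi> x < 0} \<and> (\<forall>x. \<phi> x = 0 \<longrightarrow> grad \<phi> x \<noteq> 0)"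

definition smooth_bounded_domain :: "'a::euclidean_space set \<Rightarrow> bool" where
  "smooth_bounded_domain \<Omega> \<longleftrightarrow>
     open \<Omega> \<and> connected \<Omega> \<and> bounded \<Omega> \<and> \<Omega> \<noteq> {} \<and> (\<exists>\<phi>. defining_function \<Omega> \<phi>)"

text \<open>Outward unit normal (independent of the choice of defining function).\<close>
definition outward_normal :: "'a set \<Rightarrow> 'a \<Rightarrow> 'a::euclidean_space" where
  "outward_normal \<Omega> x =
     (let \<phi> = (SOME \<phi>. defining_function \<Omega> \<phi>) in grad \<phi> x /\<^sub>R norm (grad \<phi> x))"

definition has_normal_derivative :: "'a set \<Rightarrow> ('a::euclidean_space \<Rightarrow> real) \<Rightarrow> 'a \<Rightarrow> real \<Rightarrow> bool" where
  "has_normal_derivative \<Omega> w x D \<longleftrightarrow>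
     ((\<lambda>h. (w x - w (x - h *\<^sub>R outward_normal \<Omega> x)) / h) \<longlongrightarrow> D) (at_right 0)"

definition caputo :: "real \<Rightarrow> (real \<Rightarrow> real) \<Rightarrow> real \<Rightarrow> real" where
  "caputo \<alpha> w t =
     set_lebesgue_integral lborel {0<..<t} (\<lambda>\<tau>. deriv w \<tau> / (t - \<tau>) powr \<alpha>) / Gamma (1 - \<alpha>)"

definition C1_closed_interval :: "real \<Rightarrow> (real \<Rightarrow> real) \<Rightarrow> bool" where
  "C1_closed_interval T g \<longleftrightarrow>
     (\<exists>g'. (\<forall>t\<in>{0..T}. (g has_real_derivative g' t) (at t within {0..T})) \<and> continuous_on {0..T} g')"

definition L2 :: "'a::euclidean_space set \<Rightarrow> ('a \<Rightarrow> real) \<Rightarrow> bool" where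
  "L2 \<Omega> f \<longleftrightarrow> f \<in> borel_measurable (lebesgue_on \<Omega>) \<and> integrable (lebesgue_on \<Omega>) (\<lambda>x. (f x)\<^sup>2)"

definition L2_inner :: "'a::euclidean_space set \<Rightarrow> ('a \<Rightarrow> real) \<Rightarrow> ('a \<Rightarrow> real) \<Rightarrow> real" where
  "L2_inner \<Omega> f h = (LINT x|lebesgue_on \<Omega>. f x * h x)"

definition robin_eigensystem ::
  "'a::euclidean_space set \<Rightarrow> ('a \<Rightarrow> real) \<Rightarrow> (nat \<Rightarrow> real) \<Rightarrow> (nat \<Rightarrow> 'a \<Rightarrow> real) \<Rightarrow> bool" where
  "robin_eigensystem \<Omega> lam \<mu> \<psi> \<longleftrightarrow>
     (\<forall>n. Ck_on 2 \<Omega> (\<psi> n) \<and> continuous_on (closure \<Omega>) (\<psi> n) \<and> L2 \<Omega> (\<psi> n) \<and>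
          (\<forall>x\<in>\<Omega>. - laplacian (\<psi> n) x = \<mu> n * \<psi> n x) \<and>
          (\<forall>x\<in>frontier \<Omega>. \<exists>D. has_normal_derivative \<Omega> (\<psi> n) x D \<and> D + lam x * \<psi> n x = 0)) \<and>
     (\<forall>m n. L2_inner \<Omega> (\<psi> m) (\<psi> n) = (if m = n then 1 else 0)) \<and>
     (\<forall>f. L2 \<Omega> f \<longrightarrow> (\<lambda>n. (L2_inner \<Omega> f (\<psi> n))\<^sup>2) sums (LINT x|lebesgue_on \<Omega>. (f x)\<^sup>2)) \<and>
     mono \<mu>"

text \<open>D((-Delta)^gamma) with respect to the Robin eigensystem.\<close>
definition frac_domain ::
  "'a::euclidean_space set \<Rightarrow> (nat \<Rightarrow> real) \<Rightarrow> (nat \<Rightarrow> 'a \<Rightarrow> real) \<Rightarrow> real \<Rightarrow> ('a \<Rightarrow> real) \<Rightarrow> bool" where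
  "frac_domain \<Omega> \<mu> \<psi> \<gamma> f \<longleftrightarrow>
     L2 \<Omega> f \<and> summable (\<lambda>n. (\<mu> n powr \<gamma> * L2_inner \<Omega> f (\<psi> n))\<^sup>2)"

definition classical_solution ::
  "'a::euclidean_space set \<Rightarrow> real \<Rightarrow> real \<Rightarrow> ('a \<Rightarrow> real) \<Rightarrow> ('a \<Rightarrow> real) \<Rightarrow> (real \<Rightarrow> real)
   \<Rightarrow> ('a \<Rightarrow> real \<Rightarrow> real) \<Rightarrow> ('a \<Rightarrow> real) \<Rightarrow> ('a \<Rightarrow> real \<Rightarrow> real) \<Rightarrow> bool" where
  "classical_solution \<Omega> T \<alpha> lam f g b u0 u \<longleftrightarrow>
     continuous_on (closure \<Omega> \<times> {0..T}) (\<lambda>(x, t). u x t) \<and>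
     (\<forall>x\<in>\<Omega>. (\<exists>w'. (\<forall>t\<in>{0<..T}. (u x has_real_derivative w' t) (at t within {0<..T})) \<and>
                    continuous_on {0<..T} w') \<and>
              set_integrable lborel {0<..<T} (deriv (u x))) \<and>
     (\<forall>t\<in>{0<..T}. Ck_on 2 \<Omega> (\<lambda>y. u y t)) \<and>
     (\<forall>x\<in>\<Omega>. \<forall>t\<in>{0<..T}. caputo \<alpha> (u x) t - laplacian (\<lambda>y. u y t) x = f x * g t) \<and>
     (\<forall>x\<in>frontier \<Omega>. \<forall>t\<in>{0<..T}.
        \<exists>D. has_normal_derivative \<Omega> (\<lambda>y. u y t) x D \<and> D + lam x * u x t = b x t) \<and>
     (\<forall>x\<in>closure \<Omega>. u x 0 = u0 x)"

end

theory Submission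
  imports Defs
begin


lemma interval_bound:
  fixes v v' :: "real \<Rightarrow> real"
  assumes al: "0<\<alpha>" "\<alpha><1" and t0: "0 < t0" "t0 \<le> T"
  and cont: "continuous_on {0..t0} v"
  and der: "\<forall>t\<in>{0<..T}. (v has_real_derivative v' t) (at t within {0<..T})"
  and cd: "continuous_on {0<..T} v'"
  and eps: "\<epsilon> > 0" and minp: "\<forall>\<tau>\<in>{0..t0}. v t0 + \<epsilon>*t0 \<le> v \<tau> + \<epsilon>*\<tau>"
  and ab: "0 < a" "a < b" "b < t0"
  shows "integral {a..b} (\<lambda>\<tau>. v' \<tau> * (t0-\<tau>) powr (-\<alpha>))
     \<le> (v b - v t0) * (t0-b) powr (-\<alpha>) - (\<alpha>*\<epsilon>*t0 powr (-\<alpha>))*(b-a)"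
proof -
  define P where "P \<tau> = (v \<tau> - v t0) * (t0-\<tau>) powr (-\<alpha>)" for \<tau>
  define Q where "Q \<tau> = (v \<tau> - v t0) * (\<alpha> * (t0-\<tau>) powr (-\<alpha>-1))" for \<tau>
  define c where "c = \<alpha>*\<epsilon>*t0 powr (-\<alpha>)"
  have sub: "{a..b} \<subseteq> {0<..T}" using ab t0 by auto
  have sub2: "{a..b} \<subseteq> {0..t0}" using ab t0 by auto
  have dk: "((\<lambda>\<tau>. (t0-\<tau>) powr (-\<alpha>)) has_real_derivative \<alpha> * (t0-\<tau>) powr (-\<alpha>-1)) (at \<tau> within {a..b})"
    if "\<tau> \<in> {a..b}" for \<tau>
  proof -
    have "((\<lambda>\<tau>. (t0-\<tau>) powr (-\<alpha>)) has_real_derivative (-\<alpha>) * (t0-\<tau>) powr (-\<alpha> - of_nat 1) * (-1)) (at \<tau>)"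
      by (rule DERIV_fun_powr) (use that ab in \<open>auto intro!: derivative_eq_intros\<close>)
    then show ?thesis by (auto intro: has_field_derivative_at_within)
  qed
  have dv: "(v has_real_derivative v' \<tau>) (at \<tau> within {a..b})" if "\<tau> \<in> {a..b}" for \<tau>
    using der sub that by (meson has_field_derivative_subset subsetD)
  have dP: "(P has_vector_derivative (v' \<tau> * (t0-\<tau>) powr (-\<alpha>) + Q \<tau>)) (at \<tau> within {a..b})"
    if "\<tau> \<in> {a..b}" for \<tau>
  proof -
    have "(P has_real_derivative ((v' \<tau> - 0) * (t0-\<tau>) powr (-\<alpha>) + (v \<tau> - v t0) * (\<alpha> * (t0-\<tau>) powr (-\<alpha>-1)))) (at \<tau> within {a..b})"
    proof -
      have "((\<lambda>\<tau>. v \<tau> - v t0) has_real_derivative (v' \<tau> - 0)) (at \<tau> within {a..b})"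
        by (intro DERIV_diff dv DERIV_const that)
      from DERIV_mult[OF this dk[OF that]] show ?thesis unfolding P_def by (simp add: algebra_simps)
    qed
    then show ?thesis unfolding Q_def has_real_derivative_iff_has_vector_derivative by simp
  qed
  have ftc: "((\<lambda>\<tau>. v' \<tau> * (t0-\<tau>) powr (-\<alpha>) + Q \<tau>) has_integral (P b - P a)) {a..b}"
    using ab by (intro fundamental_theorem_of_calculus dP) auto
  have cv: "continuous_on {a..b} v" using cont sub2 continuous_on_subset by blast
  have ck: "continuous_on {a..b} (\<lambda>\<tau>. (t0-\<tau>) powr r)" for r
    using ab by (intro continuous_intros) auto
  have cQ: "continuous_on {a..b} Q" unfolding Q_def
    by (intro continuous_intros cv ck)
  obtain J where J: "(Q has_integral J) {a..b}"
    using integrable_continuous_interval[OF cQ] by (auto simp: integrable_on_def)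
  have cJ: "c * (b - a) \<le> J"
  proof -
    have "((\<lambda>\<tau>. c) has_integral c * (b - a)) {a..b}"
      using has_integral_const_real[of c a b] ab by (simp add: mult.commute)
    moreover have "c \<le> Q \<tau>" if "\<tau> \<in> {a..b}" for \<tau>
    proof -
      have pos: "t0 - \<tau> > 0" using that ab by auto
      have y: "v \<tau> - v t0 \<ge> \<epsilon>*(t0-\<tau>)" using minp that sub2 by (auto simp: algebra_simps)
      have "(t0-\<tau>) * (t0-\<tau>) powr (-\<alpha>-1) = (t0-\<tau>) powr (-\<alpha>)"
      proof -
        have "(t0-\<tau>) powr (-\<alpha>) = (t0-\<tau>) powr (1 + (-\<alpha>-1))" by simp
        also have "\<dots> = (t0-\<tau>) powr 1 * (t0-\<tau>) powr (-\<alpha>-1)" by (rule powr_add)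
        finally show ?thesis using pos by simp
      qed
      have "c = \<alpha>*\<epsilon>*t0 powr (-\<alpha>)" by (simp add: c_def)
      also have "\<dots> \<le> \<alpha>*\<epsilon>*(t0-\<tau>) powr (-\<alpha>)"
        using al eps pos that ab by (intro mult_left_mono powr_mono2') auto
      also have "\<dots> = (\<epsilon>*(t0-\<tau>)) * (\<alpha> * (t0-\<tau>) powr (-\<alpha>-1))"
        using \<open>(t0-\<tau>) * (t0-\<tau>) powr (-\<alpha>-1) = (t0-\<tau>) powr (-\<alpha>)\<close> by (simp add: algebra_simps)
      also have "\<dots> \<le> Q \<tau>" unfolding Q_def
        using y al by (intro mult_right_mono) auto
      finally show ?thesis .
    qed
    ultimately show ?thesis using J by (metis has_integral_le)
  qed
  have "((\<lambda>\<tau>. v' \<tau> * (t0-\<tau>) powr (-\<alpha>)) has_integral (P b - P a - J)) {a..b}"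
    using has_integral_diff[OF ftc J] by simp
  then have "integral {a..b} (\<lambda>\<tau>. v' \<tau> * (t0-\<tau>) powr (-\<alpha>)) = P b - P a - J"
    by (rule integral_unique)
  moreover have "P a \<ge> 0"
  proof -
    have "v a - v t0 \<ge> \<epsilon>*(t0-a)" using minp ab t0 by (auto simp: algebra_simps)
    then have "v a - v t0 \<ge> 0" using eps ab by (smt (verit) mult_pos_pos)
    then show ?thesis unfolding P_def by simp
  qed
  ultimately show ?thesis using cJ unfolding P_def c_def by linarith
qed




lemma kint:
  fixes \<alpha> t0 :: real
  assumes "0<\<alpha>" "\<alpha><1" "0 < t0"
  shows "set_integrable lborel {t0/2..t0} (\<lambda>x. (t0-x) powr (-\<alpha>))"
proof -
  have "(\<lambda>t. t powr (-\<alpha>)) integrable_on {0..t0/2}"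
    by (rule integrable_on_powr_from_0) (use assms in auto)
  hence "(\<lambda>t. t powr (-\<alpha>)) integrable_on (cbox 0 (t0/2))" by simp
  from integrable_affinity[OF this, of "-1" t0]
  have "(\<lambda>t. (t0 - t) powr (-\<alpha>)) integrable_on {t0/2..t0}" by simp
  hence "(\<lambda>t. (t0 - t) powr (-\<alpha>)) absolutely_integrable_on {t0/2..t0}"
    by (subst absolutely_integrable_on_iff_nonneg) auto
  then show ?thesis unfolding set_integrable_def
    by (subst (asm) integrable_completion) (auto simp: mult_ac)
qed




lemma caputo_neg:
  fixes v v' :: "real \<Rightarrow> real"
  assumes al: "0<\<alpha>" "\<alpha><1" and t0: "0 < t0" "t0 \<le> T"
  and cont: "continuous_on {0..t0} v"
  and der: "\<forall>t\<in>{0<..T}. (v has_real_derivative v' t) (at t within {0<..T})"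
  and cd: "continuous_on {0<..T} v'"
  and int: "set_integrable lborel {0<..<T} (deriv v)"
  and eps: "\<epsilon> > 0" and minp: "\<forall>\<tau>\<in>{0..t0}. v t0 + \<epsilon>*t0 \<le> v \<tau> + \<epsilon>*\<tau>"
  shows "caputo \<alpha> v t0 < 0"
proof -
  define G where "G \<tau> = deriv v \<tau> / (t0-\<tau>) powr \<alpha>" for \<tau>
  define k where "k \<tau> = (t0-\<tau>) powr (-\<alpha>)" for \<tau>
  have dv: "deriv v \<tau> = v' \<tau>" if "0<\<tau>" "\<tau><T" for \<tau>
  proof -
    have "(v has_real_derivative v' \<tau>) (at \<tau> within {0<..<T})"
      using der that by (auto intro: has_field_derivative_subset[of _ _ _ "{0<..T}"])
    moreover have "at \<tau> within {0<..<T} = at \<tau>" by (rule at_within_open) (use that in auto)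
    ultimately have "(v has_real_derivative v' \<tau>) (at \<tau>)" by simp
    then show ?thesis by (rule DERIV_imp_deriv)
  qed
  have Gk: "G \<tau> = v' \<tau> * k \<tau>" if "0<\<tau>" "\<tau><t0" for \<tau>
    using that t0 dv by (simp add: G_def k_def powr_minus_divide)
  obtain M where M: "\<forall>\<tau>\<in>{t0/2..t0}. \<bar>v' \<tau>\<bar> \<le> M"
  proof -
    have "continuous_on {t0/2..t0} v'" by (rule continuous_on_subset[OF cd]) (use t0 in auto)
    then have "compact (v' ` {t0/2..t0})" by (intro compact_continuous_image) auto
    then obtain M where "\<forall>y\<in>v' ` {t0/2..t0}. norm y \<le> M" using compact_imp_bounded bounded_iff by metis
    then show ?thesis using that by auto
  qed
  have M0: "M \<ge> 0"
  proof -
    have "t0 \<in> {t0/2..t0}" using t0 by auto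
    then show ?thesis using M abs_ge_zero order_trans by blast
  qed
  have Gint: "set_integrable lborel {0<..<t0} G"
    unfolding set_integrable_def
  proof (rule Bochner_Integration.integrable_bound[OF _ _ AE_I2])
    show "integrable lborel (\<lambda>x. (t0/2) powr (-\<alpha>) * \<bar>indicator {0<..<T} x * deriv v x\<bar> + M * (indicator {t0/2..t0} x * k x))"
    proof -
      have i1: "integrable lborel (\<lambda>x. indicator {0<..<T} x * deriv v x)" using int by (simp add: set_integrable_def)
      have i2: "integrable lborel (\<lambda>x. indicator {t0/2..t0} x * k x)" using kint[OF al t0(1)] by (simp add: set_integrable_def k_def)
      show ?thesis using Bochner_Integration.integrable_add[OF integrable_mult_right[OF integrable_abs[OF i1]] integrable_mult_right[OF i2]] by simp
    qed
    show "(\<lambda>x. indicator {0<..<t0} x *\<^sub>R G x) \<in> borel_measurable lborel"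
    proof -
      have m1: "(\<lambda>x. indicator {0<..<T} x *\<^sub>R deriv v x) \<in> borel_measurable lborel"
        using int unfolding set_integrable_def by (rule borel_measurable_integrable)
      have m2: "(\<lambda>x. indicator {0<..<t0} x *\<^sub>R (1 / (t0-x) powr \<alpha>)) \<in> borel_measurable borel"
        by (rule borel_measurable_continuous_on_indicator) (auto intro!: continuous_intros)
      have "(\<lambda>x. indicator {0<..<t0} x *\<^sub>R G x) = (\<lambda>x. (indicator {0<..<T} x *\<^sub>R deriv v x) * (indicator {0<..<t0} x *\<^sub>R (1 / (t0-x) powr \<alpha>)))"
        using t0 by (auto simp: G_def indicator_def fun_eq_iff)
      then show ?thesis using m1 m2 by simp
    qed
    fix x
    show "norm (indicator {0<..<t0} x *\<^sub>R G x) \<le> norm ((t0/2) powr (-\<alpha>) * \<bar>indicator {0<..<T} x * deriv v x\<bar> + M * (indicator {t0/2..t0} x * k x))"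
    proof (cases "x \<in> {0<..<t0}")
      case False then show ?thesis by simp
    next
      case xin: True
      have kpos: "k x > 0" using xin by (simp add: k_def)
      have A0: "(t0/2) powr (-\<alpha>) * \<bar>indicator {0<..<T} x * deriv v x\<bar> \<ge> 0" by simp
      have B0: "M * (indicator {t0/2..t0} x * k x) \<ge> 0" using M0 kpos by (simp add: indicator_def)
      have Gx: "\<bar>G x\<bar> = \<bar>v' x\<bar> * k x" using Gk[of x] xin kpos by (simp add: abs_mult)
      have L: "norm (indicator {0<..<t0} x *\<^sub>R G x) = \<bar>G x\<bar>" using xin by (simp add: indicator_def)
      have R: "norm ((t0/2) powr (-\<alpha>) * \<bar>indicator {0<..<T} x * deriv v x\<bar> + M * (indicator {t0/2..t0} x * k x)) = (t0/2) powr (-\<alpha>) * \<bar>indicator {0<..<T} x * deriv v x\<bar> + M * (indicator {t0/2..t0} x * k x)"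
        using A0 B0 by simp
      show ?thesis unfolding L R
      proof (cases "x \<le> t0/2")
        case True
        have "k x \<le> (t0/2) powr (-\<alpha>)" unfolding k_def
          using xin True al by (intro powr_mono2') auto
        then have "\<bar>G x\<bar> \<le> (t0/2) powr (-\<alpha>) * \<bar>v' x\<bar>" using Gx
          by (metis abs_ge_zero mult.commute mult_right_mono)
        moreover have "indicator {0<..<T} x * deriv v x = v' x" using xin t0 dv[of x] by (simp add: indicator_def)
        ultimately show "\<bar>G x\<bar> \<le> (t0/2) powr (-\<alpha>) * \<bar>indicator {0<..<T} x * deriv v x\<bar> + M * (indicator {t0/2..t0} x * k x)"
          using B0 by simp
      next
        case False
        have "\<bar>G x\<bar> \<le> M * k x" using Gx M xin False kpos by (simp add: mult_right_mono)
        moreover have "indicator {t0/2..t0} x * k x = k x" using xin False by (simp add: indicator_def)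
        ultimately show "\<bar>G x\<bar> \<le> (t0/2) powr (-\<alpha>) * \<bar>indicator {0<..<T} x * deriv v x\<bar> + M * (indicator {t0/2..t0} x * k x)"
          using A0 by (simp only:)
      qed
    qed
  qed
  define a where "a n = t0 / (real n + 4)" for n :: nat
  define b where "b n = t0 - a n" for n
  have a0: "0 < a n" "a n < b n" "b n < t0" for n
  proof -
    have ap: "0 < a n" unfolding a_def using t0 by simp
    have "a n \<le> t0/4" unfolding a_def using t0 by (intro divide_left_mono) auto
    then show "0 < a n" "a n < b n" "b n < t0" using ap t0 unfolding b_def by auto
  qed
  have alim: "a \<longlonglongrightarrow> 0" unfolding a_def
  proof -
    have "filterlim (\<lambda>n. real n + 4) at_top sequentially"
      using filterlim_tendsto_add_at_top[OF tendsto_const[of "4::real"] filterlim_real_sequentially] by (simp add: add.commute)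
    then show "(\<lambda>n. t0 / (real n + 4)) \<longlonglongrightarrow> 0" by (intro tendsto_divide_0[OF tendsto_const] filterlim_at_top_imp_at_infinity)
  qed
  have blim: "b \<longlonglongrightarrow> t0" unfolding b_def using tendsto_diff[OF tendsto_const alim, of t0] by simp
  define F where "F x = indicator {0<..<t0} x *\<^sub>R G x" for x
  define s where "s n x = indicator {a n..b n} x * F x" for n x
  have Fm: "F \<in> borel_measurable lborel" using Gint unfolding set_integrable_def F_def
    by (rule borel_measurable_integrable)
  have lim1: "(\<lambda>n. integral\<^sup>L lborel (s n)) \<longlonglongrightarrow> integral\<^sup>L lborel F"
  proof (rule integral_dominated_convergence[where w = "\<lambda>x. norm (F x)"])
    show "F \<in> borel_measurable lborel" by (rule Fm)
    show "s n \<in> borel_measurable lborel" for n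
      unfolding s_def by (intro borel_measurable_times Fm borel_measurable_indicator) auto
    show "integrable lborel (\<lambda>x. norm (F x))" using Gint unfolding set_integrable_def F_def by auto
    show "AE x in lborel. norm (s n x) \<le> norm (F x)" for n
      by (intro AE_I2) (auto simp: s_def indicator_def abs_mult)
    show "AE x in lborel. (\<lambda>n. s n x) \<longlonglongrightarrow> F x"
    proof (intro AE_I2)
      fix x
      show "(\<lambda>n. s n x) \<longlonglongrightarrow> F x"
      proof (cases "x \<in> {0<..<t0}")
        case True
        have "eventually (\<lambda>n. a n < x) sequentially" using alim True by (auto intro: order_tendstoD)
        moreover have "eventually (\<lambda>n. x < b n) sequentially" using blim True by (auto intro: order_tendstoD)
        ultimately have "eventually (\<lambda>n. s n x = F x) sequentially"
          by eventually_elim (auto simp: s_def indicator_def)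
        then show ?thesis by (rule tendsto_eventually)
      next
        case False
        then have "s n x = F x" for n using a0[of n] by (auto simp: s_def F_def indicator_def)
        then show ?thesis by simp
      qed
    qed
  qed
  define c where "c = \<alpha>*\<epsilon>*t0 powr (-\<alpha>)"
  have cpos: "c > 0" using al eps t0 by (simp add: c_def)
  define r where "r n = (v (b n) - v t0) * (t0-b n) powr (-\<alpha>) - c*(b n - a n)" for n
  have bnd: "integral\<^sup>L lborel (s n) \<le> r n" for n
  proof -
    have sub: "{a n..b n} \<subseteq> {0<..<t0}" using a0[of n] by auto
    have si: "set_integrable lborel {a n..b n} G"
      by (rule set_integrable_subset[OF Gint]) (use sub in auto)
    have "integral\<^sup>L lborel (s n) = (LINT x:{a n..b n}|lborel. G x)"
      unfolding set_lebesgue_integral_def s_def F_def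
      by (rule Bochner_Integration.integral_cong) (use sub in \<open>auto simp: indicator_def\<close>)
    also have "\<dots> = integral {a n..b n} G" by (rule set_borel_integral_eq_integral(2)[OF si])
    also have "\<dots> = integral {a n..b n} (\<lambda>\<tau>. v' \<tau> * (t0-\<tau>) powr (-\<alpha>))"
      by (rule integral_cong) (use sub Gk in \<open>auto simp: k_def\<close>)
    also have "\<dots> \<le> r n" unfolding r_def c_def
      by (rule interval_bound[OF al t0 cont der cd eps minp]) (use a0 in auto)
    finally show ?thesis .
  qed
  have lim2: "r \<longlonglongrightarrow> 0 - c * (t0 - 0)"
  proof -
    have d: "((\<lambda>y. (v y - v t0) / (y - t0)) \<longlongrightarrow> v' t0) (at t0 within {0<..T})"
      using der t0 by (simp add: has_field_derivative_iff)
    have "filterlim b (at t0 within {0<..T}) sequentially"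
    proof -
      have "0 < b n \<and> b n \<le> T \<and> b n \<noteq> t0" for n using a0[of n] t0 by linarith
      then show ?thesis unfolding filterlim_at using blim by (auto intro!: always_eventually)
    qed
    from filterlim_compose[OF d this]
    have q: "(\<lambda>n. (v (b n) - v t0) / (b n - t0)) \<longlonglongrightarrow> v' t0" by (simp add: o_def)
    have p: "(\<lambda>n. (a n) powr (1-\<alpha>)) \<longlonglongrightarrow> 0"
      by (rule tendsto_zero_powrI[OF alim tendsto_const]) (use a0 al in \<open>auto intro!: always_eventually less_imp_le\<close>)
    have eq: "(v (b n) - v t0) * (t0-b n) powr (-\<alpha>) = - ((v (b n) - v t0) / (b n - t0)) * (a n) powr (1-\<alpha>)" for n
    proof -
      have ap: "a n > 0" using a0 by auto
      have "(a n) powr (1-\<alpha>) = (a n) powr (1 + (-\<alpha>))" by simp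
      also have "\<dots> = (a n) powr 1 * (a n) powr (-\<alpha>)" by (rule powr_add)
      finally have "(a n) powr (1-\<alpha>) = a n * (a n) powr (-\<alpha>)" using ap by simp
      moreover have e1: "t0 - b n = a n" "b n - t0 = - a n" by (simp_all add: b_def)
      ultimately show ?thesis unfolding e1 using ap by (simp add: field_simps)
    qed
    have "(\<lambda>n. - ((v (b n) - v t0) / (b n - t0)) * (a n) powr (1-\<alpha>)) \<longlonglongrightarrow> - v' t0 * 0"
      by (intro tendsto_mult tendsto_minus q p)
    then have "(\<lambda>n. (v (b n) - v t0) * (t0-b n) powr (-\<alpha>)) \<longlonglongrightarrow> 0" using eq by simp
    moreover have "(\<lambda>n. c * (b n - a n)) \<longlonglongrightarrow> c * (t0 - 0)"
      by (intro tendsto_mult tendsto_diff tendsto_const blim alim)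
    ultimately show ?thesis unfolding r_def by (intro tendsto_diff)
  qed
  have "integral\<^sup>L lborel F \<le> 0 - c * (t0 - 0)"
    by (rule LIMSEQ_le[OF lim1 lim2]) (use bnd in auto)
  then have neg: "integral\<^sup>L lborel F < 0" using cpos t0 by (smt (verit) mult_pos_pos)
  have "caputo \<alpha> v t0 = integral\<^sup>L lborel F / Gamma (1 - \<alpha>)"
    unfolding caputo_def F_def G_def set_lebesgue_integral_def by simp
  moreover have "Gamma (1 - \<alpha>) > 0" using al by simp
  ultimately show ?thesis using neg by (simp add: divide_neg_pos)
qed




lemma second_deriv_min:
  fixes h H :: "real \<Rightarrow> real"
  assumes d: "d > 0" and dh: "\<And>s. \<bar>s\<bar> < d \<Longrightarrow> (h has_real_derivative H s) (at s)"
  and dH: "(H has_real_derivative H2) (at 0)"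
  and mn: "\<And>s. \<bar>s\<bar> < d \<Longrightarrow> h 0 \<le> h s"
  shows "H2 \<ge> 0"
proof (rule ccontr)
  assume "\<not> H2 \<ge> 0" hence neg: "H2 < 0" by simp
  have H0: "H 0 = 0"
    by (rule DERIV_local_min[OF dh[of 0] d]) (use d mn in auto)
  have "((\<lambda>y. (H y - H 0) / (y - 0)) \<longlongrightarrow> H2) (at 0)"
    using dH by (simp add: has_field_derivative_iff)
  then have "eventually (\<lambda>y. (H y - H 0) / (y - 0) < 0) (at 0)"
    using neg by (auto intro: order_tendstoD)
  then obtain e where e: "e > 0" "\<And>y. y \<noteq> 0 \<Longrightarrow> dist y 0 < e \<Longrightarrow> H y / y < 0"
    unfolding eventually_at using H0 by auto
  define s where "s = min e d / 2"
  have s: "0 < s" "s < d" "s < e" using e d by (auto simp: s_def)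
  obtain z where z: "0 < z" "z < s" "h s - h 0 = (s - 0) * H z"
    using MVT2[of 0 s h H] s dh by auto
  have "H z / z < 0" using e(2)[of z] z s by auto
  then have "H z < 0" using z by (simp add: divide_less_0_iff)
  then have "s * H z < 0" using z s by (simp add: mult_pos_neg)
  then have "h s < h 0" using z by simp
  moreover have "h 0 \<le> h s" using mn[of s] s by auto
  ultimately show False by simp
qed

lemma Ck_on_0D:
  assumes "Ck_on k S f" "0 < k" "v \<in> Basis" "x \<in> S"
  shows "(\<lambda>s. f (x + s *\<^sub>R v)) differentiable (at 0)"
  using assms unfolding Ck_on_def by (drule_tac spec[of _ "[]"]) auto

lemma Ck_on_1D:
  assumes "Ck_on k S f" "1 < k" "i \<in> Basis" "v \<in> Basis" "x \<in> S"
  shows "(\<lambda>s. pd [i] f (x + s *\<^sub>R v)) differentiable (at 0)"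
  using assms unfolding Ck_on_def by (drule_tac spec[of _ "[i]"]) auto

lemma Ck_on_contD:
  assumes "Ck_on k S f" "1 \<le> k" "i \<in> Basis"
  shows "continuous_on S (pd [i] f)"
  using assms unfolding Ck_on_def by (drule_tac spec[of _ "[i]"]) auto

lemma Ck_on_cont0:
  assumes "Ck_on k S f"
  shows "continuous_on S f"
  using assms unfolding Ck_on_def by (drule_tac spec[of _ "[]"]) auto

lemma dir_deriv:
  fixes f :: "'a::euclidean_space \<Rightarrow> real"
  assumes "(\<lambda>r. f ((y + s *\<^sub>R v) + r *\<^sub>R v)) differentiable (at 0)"
  shows "((\<lambda>s. f (y + s *\<^sub>R v)) has_real_derivative pd [v] f (y + s *\<^sub>R v)) (at s)"
proof -
  have "((\<lambda>r. f ((y + s *\<^sub>R v) + r *\<^sub>R v)) has_real_derivative pd [v] f (y + s *\<^sub>R v)) (at 0)"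
    using assms by (simp add: DERIV_deriv_iff_real_differentiable)
  moreover have "(\<lambda>r. f ((y + s *\<^sub>R v) + r *\<^sub>R v)) = (\<lambda>r. (\<lambda>s. f (y + s *\<^sub>R v)) (r + s))"
    by (simp add: algebra_simps scaleR_add_left)
  ultimately show ?thesis using DERIV_shift[of "\<lambda>s. f (y + s *\<^sub>R v)" _ 0 s] by simp
qed

lemma lap_min:
  fixes U :: "'a::euclidean_space \<Rightarrow> real"
  assumes "open \<Omega>" "x0 \<in> \<Omega>" "Ck_on 2 \<Omega> U" "\<forall>y\<in>\<Omega>. U x0 \<le> U y"
  shows "laplacian U x0 \<ge> 0"
  unfolding laplacian_def
proof (rule sum_nonneg)
  fix i :: 'a assume i: "i \<in> Basis"
  obtain d where d: "d > 0" "ball x0 d \<subseteq> \<Omega>" using assms(1,2) open_contains_ball by blast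
  define h where "h s = U (x0 + s *\<^sub>R i)" for s
  define H where "H s = pd [i] U (x0 + s *\<^sub>R i)" for s
  have inO: "x0 + s *\<^sub>R i \<in> \<Omega>" if "\<bar>s\<bar> < d" for s
    using that i d by (auto simp: dist_norm intro!: subsetD[OF d(2)])
  have dh: "(h has_real_derivative H s) (at s)" if "\<bar>s\<bar> < d" for s
    unfolding h_def H_def
    by (rule dir_deriv, rule Ck_on_0D[OF assms(3) _ i inO[OF that]]) simp
  have "H differentiable (at 0)" unfolding H_def
    using Ck_on_1D[OF assms(3) _ i i assms(2)] by simp
  then have dH: "(H has_real_derivative deriv H 0) (at 0)"
    by (simp add: DERIV_deriv_iff_real_differentiable)
  have "deriv H 0 \<ge> 0"
    by (rule second_deriv_min[OF d(1) dh dH]) (use assms(4) inO h_def in auto)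
  moreover have "H = (\<lambda>s. pd [i] U (x0 + s *\<^sub>R i))" by (simp add: H_def fun_eq_iff)
  ultimately show "pd [i, i] U x0 \<ge> 0" by simp
qed




lemma mvt_dir:
  fixes \<phi> :: "'a::euclidean_space \<Rightarrow> real"
  assumes C: "\<forall>x. (\<lambda>s. \<phi> (x + s *\<^sub>R v)) differentiable (at 0)" and v: "v \<in> Basis"
  shows "\<exists>z. dist z y \<le> \<bar>c\<bar> \<and> \<phi> (y + c *\<^sub>R v) - \<phi> y = c * pd [v] \<phi> z"
proof -
  define h where "h s = \<phi> (y + s *\<^sub>R v)" for s
  have dh: "(h has_real_derivative pd [v] \<phi> (y + s *\<^sub>R v)) (at s)" for s
    unfolding h_def by (rule dir_deriv) (use C in auto)
  have nv: "norm v = 1" using v by simp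
  consider "c = 0" | "c > 0" | "c < 0" by linarith
  then show ?thesis
  proof cases
    case 1 then show ?thesis by (intro exI[of _ y]) simp
  next
    case 2
    obtain z where z: "0 < z" "z < c" "h c - h 0 = (c - 0) * pd [v] \<phi> (y + z *\<^sub>R v)"
      using MVT2[of 0 c h "\<lambda>s. pd [v] \<phi> (y + s *\<^sub>R v)"] 2 dh by auto
    show ?thesis
      by (intro exI[of _ "y + z *\<^sub>R v"]) (use z nv in \<open>auto simp: h_def dist_norm\<close>)
  next
    case 3
    obtain z where z: "c < z" "z < 0" "h 0 - h c = (0 - c) * pd [v] \<phi> (y + z *\<^sub>R v)"
      using MVT2[of c 0 h "\<lambda>s. pd [v] \<phi> (y + s *\<^sub>R v)"] 3 dh by auto
    have "h c - h 0 = c * pd [v] \<phi> (y + z *\<^sub>R v)" using z by (simp add: algebra_simps)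
    then show ?thesis
      by (intro exI[of _ "y + z *\<^sub>R v"]) (use z nv in \<open>auto simp: h_def dist_norm\<close>)
  qed
qed

lemma telescope:
  fixes \<phi> :: "'a::euclidean_space \<Rightarrow> real"
  assumes fin: "finite B" "B \<subseteq> Basis"
    and C: "\<forall>v\<in>Basis. \<forall>x. (\<lambda>s. \<phi> (x + s *\<^sub>R v)) differentiable (at 0)"
  shows "\<forall>y. \<exists>\<xi>. (\<forall>i\<in>B. dist (\<xi> i) y \<le> (\<Sum>j\<in>B. \<bar>c j\<bar>)) \<and>
     \<phi> (y + (\<Sum>i\<in>B. c i *\<^sub>R i)) - \<phi> y = (\<Sum>i\<in>B. c i * pd [i] \<phi> (\<xi> i))"
  using fin
proof (induction B rule: finite_induct)
  case empty
  then show ?case by simp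
next
  case (insert a B)
  show ?case
  proof
    fix y
    have aB: "a \<in> Basis" using insert by auto
    obtain z where z: "dist z y \<le> \<bar>c a\<bar>" "\<phi> (y + c a *\<^sub>R a) - \<phi> y = c a * pd [a] \<phi> z"
      using mvt_dir[of \<phi> a y "c a"] C aB by blast
    define y' where "y' = y + c a *\<^sub>R a"
    obtain \<xi> where \<xi>: "\<forall>i\<in>B. dist (\<xi> i) y' \<le> (\<Sum>j\<in>B. \<bar>c j\<bar>)"
      "\<phi> (y' + (\<Sum>i\<in>B. c i *\<^sub>R i)) - \<phi> y' = (\<Sum>i\<in>B. c i * pd [i] \<phi> (\<xi> i))"
      using insert by blast
    have dy: "dist y' y = \<bar>c a\<bar>" using aB by (simp add: y'_def dist_norm)
    have s0: "(\<Sum>j\<in>B. \<bar>c j\<bar>) \<ge> 0" by (simp add: sum_nonneg)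
    have S1: "(\<Sum>i\<in>insert a B. c i *\<^sub>R i) = c a *\<^sub>R a + (\<Sum>i\<in>B. c i *\<^sub>R i)"
      using insert by simp
    have S2: "(\<Sum>i\<in>insert a B. c i * pd [i] \<phi> ((\<xi>(a := z)) i)) = c a * pd [a] \<phi> z + (\<Sum>i\<in>B. c i * pd [i] \<phi> (\<xi> i))"
    proof -
      have "(\<Sum>i\<in>B. c i * pd [i] \<phi> ((\<xi>(a := z)) i)) = (\<Sum>i\<in>B. c i * pd [i] \<phi> (\<xi> i))"
        using insert by (intro sum.cong) auto
      then show ?thesis using insert by simp
    qed
    have S3: "(\<Sum>j\<in>insert a B. \<bar>c j\<bar>) = \<bar>c a\<bar> + (\<Sum>j\<in>B. \<bar>c j\<bar>)" using insert by simp
    show "\<exists>\<xi>. (\<forall>i\<in>insert a B. dist (\<xi> i) y \<le> (\<Sum>j\<in>insert a B. \<bar>c j\<bar>)) \<and>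
       \<phi> (y + (\<Sum>i\<in>insert a B. c i *\<^sub>R i)) - \<phi> y = (\<Sum>i\<in>insert a B. c i * pd [i] \<phi> (\<xi> i))"
    proof (intro exI[of _ "\<xi>(a := z)"] conjI ballI)
      fix i assume i: "i \<in> insert a B"
      show "dist ((\<xi>(a := z)) i) y \<le> (\<Sum>j\<in>insert a B. \<bar>c j\<bar>)"
      proof (cases "i = a")
        case True then have "(\<xi>(a := z)) i = z" by simp
        moreover have "dist z y \<le> \<bar>c a\<bar> + (\<Sum>j\<in>B. \<bar>c j\<bar>)" using z(1) s0 by linarith
        ultimately show ?thesis unfolding S3 by simp
      next
        case False
        then have "i \<in> B" using i by auto
        then have "dist (\<xi> i) y' \<le> (\<Sum>j\<in>B. \<bar>c j\<bar>)" using \<xi> by auto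
        then have "dist (\<xi> i) y \<le> (\<Sum>j\<in>B. \<bar>c j\<bar>) + \<bar>c a\<bar>"
          using dist_triangle[of "\<xi> i" y y'] dy by linarith
        then show ?thesis using False S3 by simp
      qed
    next
      have "y + (\<Sum>i\<in>insert a B. c i *\<^sub>R i) = y' + (\<Sum>i\<in>B. c i *\<^sub>R i)"
        unfolding S1 y'_def by (simp add: algebra_simps)
      then have E: "\<phi> (y + (\<Sum>i\<in>insert a B. c i *\<^sub>R i)) = \<phi> (y' + (\<Sum>i\<in>B. c i *\<^sub>R i))" by simp
      have z2: "\<phi> y' - \<phi> y = c a * pd [a] \<phi> z" using z(2) unfolding y'_def .
      show "\<phi> (y + (\<Sum>i\<in>insert a B. c i *\<^sub>R i)) - \<phi> y = (\<Sum>i\<in>insert a B. c i * pd [i] \<phi> ((\<xi>(a := z)) i))"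
        unfolding S2 E using \<xi>(2) z2 by linarith
    qed
  qed
qed




lemma inward:
  fixes \<Omega> :: "'a::euclidean_space set"
  assumes df: "defining_function \<Omega> \<phi>" and x0: "x0 \<in> frontier \<Omega>"
  shows "eventually (\<lambda>h. x0 - h *\<^sub>R (grad \<phi> x0 /\<^sub>R norm (grad \<phi> x0)) \<in> \<Omega>) (at_right 0)"
proof -
  have sm: "Ck_on 1 UNIV \<phi>" and Om: "\<Omega> = {x. \<phi> x < 0}" and gz: "\<forall>x. \<phi> x = 0 \<longrightarrow> grad \<phi> x \<noteq> 0"
    using df unfolding defining_function_def smooth_on_def by auto
  have C: "\<forall>v\<in>Basis. \<forall>x. (\<lambda>s. \<phi> (x + s *\<^sub>R v)) differentiable (at 0)"
    using Ck_on_0D[OF sm] by auto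
  have Cc: "isCont (pd [i] \<phi>) x" if "i \<in> Basis" for i x
    using Ck_on_contD[OF sm _ that] by (simp add: continuous_on_eq_continuous_at)
  have cphi: "continuous_on UNIV \<phi>" using Ck_on_cont0[OF sm] .
  have opn: "open \<Omega>" unfolding Om by (rule open_Collect_less[OF cphi continuous_on_const])
  have phi0: "\<phi> x0 = 0"
  proof -
    have "x0 \<notin> \<Omega>" using x0 opn by (simp add: frontier_def interior_open)
    then have "\<not> \<phi> x0 < 0" using Om by auto
    moreover have "closure \<Omega> \<subseteq> {x. \<phi> x \<le> 0}"
      by (rule closure_minimal) (use Om closed_Collect_le[OF cphi continuous_on_const] in auto)
    then have "\<phi> x0 \<le> 0" using x0 by (auto simp: frontier_def)
    ultimately show ?thesis by simp
  qed
  define gr where "gr = grad \<phi> x0"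
  have grnz: "gr \<noteq> 0" using gz phi0 by (simp add: gr_def)
  define ng where "ng = norm gr"
  have ngp: "ng > 0" using grnz by (simp add: ng_def)
  define n where "n = gr /\<^sub>R ng"
  have nn: "norm n = 1" using ngp by (simp add: n_def ng_def)
  define N where "N = real (card (Basis::'a set))"
  have Np: "N > 0" by (simp add: N_def card_gt_0_iff)
  define e where "e = ng / (2*N)"
  have ep: "e > 0" using ngp Np by (simp add: e_def)
  have "eventually (\<lambda>z. \<forall>i\<in>Basis. \<bar>pd [i] \<phi> z - pd [i] \<phi> x0\<bar> < e) (at x0)"
  proof (rule eventually_ball_finite)
    show "finite (Basis::'a set)" by simp
    show "\<forall>i\<in>Basis. \<forall>\<^sub>F z in at x0. \<bar>pd [i] \<phi> z - pd [i] \<phi> x0\<bar> < e"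
    proof
      fix i :: 'a assume "i \<in> Basis"
      then have "(pd [i] \<phi> \<longlongrightarrow> pd [i] \<phi> x0) (at x0)" using Cc by (simp add: isCont_def)
      from tendstoD[OF this ep] show "\<forall>\<^sub>F z in at x0. \<bar>pd [i] \<phi> z - pd [i] \<phi> x0\<bar> < e"
        by (simp add: dist_real_def)
    qed
  qed
  then obtain \<delta> where \<delta>: "\<delta> > 0" "\<And>z. z \<noteq> x0 \<Longrightarrow> dist z x0 < \<delta> \<Longrightarrow> \<forall>i\<in>Basis. \<bar>pd [i] \<phi> z - pd [i] \<phi> x0\<bar> < e"
    unfolding eventually_at by blast
  have close: "\<bar>pd [i] \<phi> z - pd [i] \<phi> x0\<bar> < e" if "dist z x0 < \<delta>" "i \<in> Basis" for z i
    using \<delta>(2)[of z] that ep by (cases "z = x0") auto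
  have key: "(\<Sum>i\<in>Basis. (n \<bullet> i) * pd [i] \<phi> x0) = ng"
  proof -
    have "n \<bullet> gr = (\<Sum>i\<in>Basis. pd [i] \<phi> x0 * (n \<bullet> i))"
      unfolding gr_def grad_def by (simp add: inner_sum_right)
    moreover have "n \<bullet> gr = ng"
      using ngp by (simp add: n_def ng_def power2_norm_eq_inner[symmetric] power2_eq_square)
    ultimately show ?thesis by (simp add: mult.commute)
  qed
  have nb: "\<bar>n \<bullet> i\<bar> \<le> 1" if "i \<in> Basis" for i
    using Basis_le_norm[OF that, of n] nn by simp
  show ?thesis
    unfolding eventually_at_right_field
  proof (intro exI[of _ "\<delta> / N"] conjI allI impI)
    show "0 < \<delta> / N" using \<delta> Np by simp
    fix h :: real assume h: "0 < h" "h < \<delta> / N"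
    define c where "c i = - h * (n \<bullet> i)" for i
    obtain \<xi> where D: "\<forall>i\<in>Basis. dist (\<xi> i) x0 \<le> (\<Sum>j\<in>Basis. \<bar>c j\<bar>)"
      and E: "\<phi> (x0 + (\<Sum>i\<in>Basis. c i *\<^sub>R i)) - \<phi> x0 = (\<Sum>i\<in>Basis. c i * pd [i] \<phi> (\<xi> i))"
      using telescope[OF finite_Basis order_refl C, of c] by blast
    have sumc: "(\<Sum>i\<in>Basis. c i *\<^sub>R i) = - (h *\<^sub>R n)"
    proof -
      have "(\<Sum>i\<in>Basis. c i *\<^sub>R i) = (-h) *\<^sub>R (\<Sum>i\<in>Basis. (n \<bullet> i) *\<^sub>R i)"
        by (simp add: c_def scaleR_sum_right)
      then show ?thesis by (simp add: euclidean_representation)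
    qed
    have sabs: "(\<Sum>j\<in>Basis. \<bar>c j\<bar>) \<le> h * N"
    proof -
      have "(\<Sum>j\<in>Basis. \<bar>c j\<bar>) = h * (\<Sum>j\<in>Basis. \<bar>n \<bullet> j\<bar>)"
        using h by (simp add: c_def abs_mult sum_distrib_left)
      also have "\<dots> \<le> h * (\<Sum>j\<in>(Basis::'a set). 1)"
        using h nb by (intro mult_left_mono sum_mono) auto
      finally show ?thesis by (simp add: N_def)
    qed
    have dx: "dist (\<xi> i) x0 < \<delta>" if "i \<in> Basis" for i
    proof -
      have "h * N < \<delta>" using h Np by (simp add: field_simps)
      then show ?thesis using D that sabs by fastforce
    qed
    have pt: "(n \<bullet> i) * pd [i] \<phi> x0 - e \<le> (n \<bullet> i) * pd [i] \<phi> (\<xi> i)" if "i \<in> Basis" for i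
    proof -
      have "\<bar>(n \<bullet> i) * (pd [i] \<phi> (\<xi> i) - pd [i] \<phi> x0)\<bar> \<le> 1 * e"
        unfolding abs_mult using nb[OF that] close[OF dx[OF that] that]
        by (intro mult_mono) auto
      then show ?thesis by (simp add: algebra_simps abs_le_iff)
    qed
    have "(\<Sum>i\<in>Basis. (n \<bullet> i) * pd [i] \<phi> x0 - e) \<le> (\<Sum>i\<in>Basis. (n \<bullet> i) * pd [i] \<phi> (\<xi> i))"
      by (rule sum_mono) (rule pt)
    moreover have "(\<Sum>i\<in>Basis. (n \<bullet> i) * pd [i] \<phi> x0 - e) = ng - N * e"
      by (simp only: sum_subtractf key sum_constant) (simp add: N_def)
    moreover have "N * e = ng / 2" using Np by (simp add: e_def)
    ultimately have S: "ng / 2 \<le> (\<Sum>i\<in>Basis. (n \<bullet> i) * pd [i] \<phi> (\<xi> i))" by simp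
    have "(\<Sum>i\<in>Basis. c i * pd [i] \<phi> (\<xi> i)) = - h * (\<Sum>i\<in>Basis. (n \<bullet> i) * pd [i] \<phi> (\<xi> i))"
      by (simp add: c_def sum_distrib_left mult.assoc)
    also have "\<dots> \<le> - h * (ng / 2)" using S h by simp
    also have "\<dots> < 0" using h ngp by simp
    finally have "\<phi> (x0 - h *\<^sub>R n) < 0" using E sumc phi0 by simp
    then show "x0 - h *\<^sub>R (grad \<phi> x0 /\<^sub>R norm (grad \<phi> x0)) \<in> \<Omega>"
      using Om by (simp add: n_def gr_def ng_def)
  qed
qed




theorem theorem4p2:
  fixes \<Omega> :: "'a::euclidean_space set"
    and T \<alpha> lam_minus lam_plus :: real
    and lam u0 f :: "'a \<Rightarrow> real"
    and g :: "real \<Rightarrow> real"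
    and b u :: "'a \<Rightarrow> real \<Rightarrow> real"
    and \<mu> :: "nat \<Rightarrow> real" and \<psi> :: "nat \<Rightarrow> 'a \<Rightarrow> real"
  assumes dom: "smooth_bounded_domain \<Omega>"
    and T: "T > 0"
    and alpha: "0 < \<alpha>" "\<alpha> < 1"
    and lam_bounds: "0 < lam_minus" "\<forall>x\<in>frontier \<Omega>. lam_minus < lam x \<and> lam x \<le> lam_plus"
    and eig: "robin_eigensystem \<Omega> lam \<mu> \<psi>"
    and u0_reg: "frac_domain \<Omega> \<mu> \<psi> 3 u0"
    and g_reg: "C1_closed_interval T g"
    and f_reg: "frac_domain \<Omega> \<mu> \<psi> 2 f"
    and u0_nonneg: "\<forall>x\<in>closure \<Omega>. u0 x \<ge> 0"
    and F_nonneg: "\<forall>x\<in>\<Omega>. \<forall>t\<in>{0..T}. f x * g t \<ge> 0"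
    and b_nonneg: "\<forall>x\<in>frontier \<Omega>. \<forall>t\<in>{0..T}. b x t \<ge> 0"
    and sol: "classical_solution \<Omega> T \<alpha> lam f g b u0 u"
  shows "\<forall>x\<in>closure \<Omega>. \<forall>t\<in>{0..T}. u x t \<ge> 0"
proof -
  have opn: "open \<Omega>" and bdd: "bounded \<Omega>" and ne: "\<Omega> \<noteq> {}" and exdf: "\<exists>\<phi>. defining_function \<Omega> \<phi>"
    using dom unfolding smooth_bounded_domain_def by auto
  have cu: "continuous_on (closure \<Omega> \<times> {0..T}) (\<lambda>(x, t). u x t)"
    and dt: "\<forall>x\<in>\<Omega>. (\<exists>w'. (\<forall>t\<in>{0<..T}. (u x has_real_derivative w' t) (at t within {0<..T})) \<and>
                    continuous_on {0<..T} w') \<and> set_integrable lborel {0<..<T} (deriv (u x))"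
    and ck: "\<forall>t\<in>{0<..T}. Ck_on 2 \<Omega> (\<lambda>y. u y t)"
    and pde: "\<forall>x\<in>\<Omega>. \<forall>t\<in>{0<..T}. caputo \<alpha> (u x) t - laplacian (\<lambda>y. u y t) x = f x * g t"
    and bc: "\<forall>x\<in>frontier \<Omega>. \<forall>t\<in>{0<..T}.
        \<exists>D. has_normal_derivative \<Omega> (\<lambda>y. u y t) x D \<and> D + lam x * u x t = b x t"
    and ic: "\<forall>x\<in>closure \<Omega>. u x 0 = u0 x"
    using sol unfolding classical_solution_def by auto
  have main: "\<forall>x\<in>closure \<Omega>. \<forall>t\<in>{0..T}. u x t + \<epsilon> * t \<ge> 0" if eps: "\<epsilon> > 0" for \<epsilon>
  proof (rule ccontr)
    assume neg: "\<not> (\<forall>x\<in>closure \<Omega>. \<forall>t\<in>{0..T}. u x t + \<epsilon> * t \<ge> 0)"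
    define K where "K = closure \<Omega> \<times> {0..T}"
    define W where "W p = u (fst p) (snd p) + \<epsilon> * snd p" for p
    have cK: "compact K" unfolding K_def using bdd by (intro compact_Times compact_closure[THEN iffD2]) auto
    have neK: "K \<noteq> {}" unfolding K_def using ne T by auto
    have cW: "continuous_on K W"
    proof -
      have "continuous_on K (\<lambda>p. u (fst p) (snd p))"
        using cu unfolding K_def by (simp add: case_prod_unfold)
      then show ?thesis unfolding W_def by (intro continuous_intros)
    qed
    obtain p0 where p0: "p0 \<in> K" "\<forall>p\<in>K. W p0 \<le> W p"
      using continuous_attains_inf[OF cK neK cW] by blast
    obtain x0 t0 where xt: "p0 = (x0, t0)" by (cases p0)
    have x0c: "x0 \<in> closure \<Omega>" and t0r: "0 \<le> t0" "t0 \<le> T" using p0 xt by (auto simp: K_def)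
    have minp: "u x0 t0 + \<epsilon> * t0 \<le> u x t + \<epsilon> * t" if "x \<in> closure \<Omega>" "t \<in> {0..T}" for x t
      using p0(2)[rule_format, of "(x,t)"] that xt by (auto simp: K_def W_def)
    have Wneg: "u x0 t0 + \<epsilon> * t0 < 0" using neg minp by force
    show False
    proof (cases "t0 = 0")
      case True
      then show ?thesis using Wneg ic u0_nonneg x0c by auto
    next
      case False
      then have t0p: "t0 > 0" using t0r by simp
      have uneg: "u x0 t0 < 0" using Wneg eps t0p by (smt (verit) mult_pos_pos)
      show ?thesis
      proof (cases "x0 \<in> \<Omega>")
        case True
        define U where "U = (\<lambda>y. u y t0)"
        have "Ck_on 2 \<Omega> U" using ck t0p t0r by (simp add: U_def)
        moreover have "\<forall>y\<in>\<Omega>. U x0 \<le> U y"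
          using minp t0r closure_subset by (fastforce simp: U_def)
        ultimately have lap: "laplacian U x0 \<ge> 0" by (intro lap_min[OF opn True])
        obtain w' where w': "\<forall>t\<in>{0<..T}. (u x0 has_real_derivative w' t) (at t within {0<..T})"
          "continuous_on {0<..T} w'" and int: "set_integrable lborel {0<..<T} (deriv (u x0))"
          using dt True by blast
        have cont: "continuous_on {0..t0} (u x0)"
        proof -
          have "continuous_on {0..T} ((\<lambda>(x, t). u x t) \<circ> (\<lambda>t. (x0, t)))"
            by (rule continuous_on_compose[OF _ continuous_on_subset[OF cu]])
              (use x0c in \<open>auto intro!: continuous_intros\<close>)
          then have "continuous_on {0..T} (u x0)" by (simp add: o_def)
          then show ?thesis by (rule continuous_on_subset) (use t0r in auto)
        qed
        have "caputo \<alpha> (u x0) t0 < 0"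
          by (rule caputo_neg[OF alpha t0p t0r(2) cont w' int eps]) (use minp x0c t0r in auto)
        moreover have "caputo \<alpha> (u x0) t0 - laplacian U x0 = f x0 * g t0"
          using pde True t0p t0r by (simp add: U_def)
        moreover have "f x0 * g t0 \<ge> 0" using F_nonneg True t0r by auto
        ultimately show False using lap by linarith
      next
        case False
        then have x0f: "x0 \<in> frontier \<Omega>" using x0c opn by (simp add: frontier_def interior_open)
        obtain D where D: "has_normal_derivative \<Omega> (\<lambda>y. u y t0) x0 D" "D + lam x0 * u x0 t0 = b x0 t0"
          using bc x0f t0p t0r by force
        have "b x0 t0 \<ge> 0" using b_nonneg x0f t0r by auto
        moreover have "lam x0 > 0" using lam_bounds x0f by force
        then have "lam x0 * u x0 t0 < 0" using uneg by (simp add: mult_pos_neg)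
        ultimately have Dp: "D > 0" using D(2) by linarith
        define \<phi> where "\<phi> = (SOME \<phi>. defining_function \<Omega> \<phi>)"
        have df: "defining_function \<Omega> \<phi>" unfolding \<phi>_def using exdf by (rule someI_ex)
        have on: "outward_normal \<Omega> x0 = grad \<phi> x0 /\<^sub>R norm (grad \<phi> x0)"
          unfolding outward_normal_def \<phi>_def Let_def ..
        have ev: "eventually (\<lambda>h. x0 - h *\<^sub>R outward_normal \<Omega> x0 \<in> \<Omega>) (at_right 0)"
          unfolding on by (rule inward[OF df x0f])
        have "eventually (\<lambda>h. (u x0 t0 - u (x0 - h *\<^sub>R outward_normal \<Omega> x0) t0) / h \<le> 0) (at_right 0)"
          using ev eventually_at_right_less[of "0::real"]
        proof eventually_elim
          case (elim h)
          then have "u x0 t0 \<le> u (x0 - h *\<^sub>R outward_normal \<Omega> x0) t0"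
            using minp[of "x0 - h *\<^sub>R outward_normal \<Omega> x0" t0] closure_subset t0r by auto
          then show ?case using elim by (simp add: divide_nonpos_pos)
        qed
        moreover have "((\<lambda>h. (u x0 t0 - u (x0 - h *\<^sub>R outward_normal \<Omega> x0) t0) / h) \<longlongrightarrow> D) (at_right 0)"
          using D(1) unfolding has_normal_derivative_def .
        ultimately have "D \<le> 0"
          by (intro tendsto_le[OF _ tendsto_const]) auto
        then show False using Dp by simp
      qed
    qed
  qed
  show ?thesis
  proof (intro ballI)
    fix x t assume x: "x \<in> closure \<Omega>" and t: "t \<in> {0..T}"
    show "u x t \<ge> 0"
    proof (rule ccontr)
      assume "\<not> u x t \<ge> 0"
      then have un: "u x t < 0" by simp
      have "t \<noteq> 0" using un ic u0_nonneg x by auto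
      then have tp: "t > 0" using t by simp
      define \<epsilon> where "\<epsilon> = - u x t / (2 * t)"
      have ep: "\<epsilon> > 0" using un tp by (simp add: \<epsilon>_def divide_neg_pos)
      have "\<epsilon> * t = - u x t / 2" using tp by (simp add: \<epsilon>_def)
      then have "u x t + \<epsilon> * t < 0" using un by simp
      then show False using main[OF ep] x t by force
    qed
  qed
qed


end
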